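(* Every connected (finite, simple) graph $G$ satisfies $\mathrm{rc}(G) \leq 2\,\mathrm{f}(G) + 2$.
   Context: For an edge-coloring of a graph $G$, a path is rainbow if no two of its edges have the same color; $G$ is rainbow-connected if every pair of vertices is joined by a rainbow path. The rainbow connection number $\mathrm{rc}(G)$ is the minimum number of colors in an edge-coloring making $G$ rainbow-connected. The forest number $\mathrm{f}(G)$ is the maximum number of vertices of an induced subgraph of $G$ that is a forest. *)

theory Defs
  imports Main
begin

definition simple_graph :: "'a set \<Rightarrow> 'a set set \<Rightarrow> bool" where
  "simple_graph V E \<longleftrightarrow> finite V \<and>
     (\<forall>e\<in>E. \<exists>u v. u \<in> V \<and> v \<in> V \<and> u \<noteq> v \<and> e = {u, v})"

fun walk_edges :: "'a list \<Rightarrow> 'a set list" where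
  "walk_edges (x # y # xs) = {x, y} # walk_edges (y # xs)"
| "walk_edges _ = []"

definition is_path :: "'a set \<Rightarrow> 'a set set \<Rightarrow> 'a list \<Rightarrow> 'a \<Rightarrow> 'a \<Rightarrow> bool" where
  "is_path V E p u v \<longleftrightarrow> p \<noteq> [] \<and> hd p = u \<and> last p = v \<and> distinct p \<and>
     set p \<subseteq> V \<and> set (walk_edges p) \<subseteq> E"

definition connected_graph :: "'a set \<Rightarrow> 'a set set \<Rightarrow> bool" where
  "connected_graph V E \<longleftrightarrow> V \<noteq> {} \<and> (\<forall>u\<in>V. \<forall>v\<in>V. \<exists>p. is_path V E p u v)"

definition rainbow :: "('a set \<Rightarrow> nat) \<Rightarrow> 'a list \<Rightarrow> bool" where
  "rainbow c p \<longleftrightarrow> distinct (map c (walk_edges p))"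

definition rainbow_connected :: "'a set \<Rightarrow> 'a set set \<Rightarrow> ('a set \<Rightarrow> nat) \<Rightarrow> bool" where
  "rainbow_connected V E c \<longleftrightarrow>
     (\<forall>u\<in>V. \<forall>v\<in>V. \<exists>p. is_path V E p u v \<and> rainbow c p)"

definition rc :: "'a set \<Rightarrow> 'a set set \<Rightarrow> nat" where
  "rc V E = (LEAST k. \<exists>c. c ` E \<subseteq> {..<k} \<and> rainbow_connected V E c)"

definition has_cycle :: "'a set \<Rightarrow> 'a set set \<Rightarrow> bool" where
  "has_cycle V E \<longleftrightarrow> (\<exists>p. length p \<ge> 3 \<and> distinct p \<and> set p \<subseteq> V \<and>
      set (walk_edges p) \<subseteq> E \<and> {last p, hd p} \<in> E)"

definition forest :: "'a set \<Rightarrow> 'a set set \<Rightarrow> bool" where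
  "forest V E \<longleftrightarrow> \<not> has_cycle V E"

definition induced_edges :: "'a set set \<Rightarrow> 'a set \<Rightarrow> 'a set set" where
  "induced_edges E S = {e \<in> E. e \<subseteq> S}"

definition forest_number :: "'a set \<Rightarrow> 'a set set \<Rightarrow> nat" where
  "forest_number V E = Max {card S | S. S \<subseteq> V \<and> forest S (induced_edges E S)}"

end

theory Submission
  imports Defs
begin

lemma we1: "p \<noteq> [] \<Longrightarrow> walk_edges (x # p) = {x, hd p} # walk_edges p"
  by (cases p) auto

lemma we2: "p \<noteq> [] \<Longrightarrow> walk_edges (p @ [v]) = walk_edges p @ [{last p, v}]"
proof (induction p)
  case Nil then show ?case by simp
next
  case (Cons a p) then show ?case by (cases p) auto
qed

lemma we_app: "xs \<noteq> [] \<Longrightarrow> ys \<noteq> [] \<Longrightarrow>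
  walk_edges (xs @ ys) = walk_edges xs @ {last xs, hd ys} # walk_edges ys"
proof (induction xs)
  case Nil then show ?case by simp
next
  case (Cons a xs) then show ?case by (cases xs; cases ys) auto
qed

lemma we_sub: "e \<in> set (walk_edges p) \<Longrightarrow> e \<subseteq> set p"
  by (induction p rule: walk_edges.induct) auto

lemma hd_last_distinct: "distinct ys \<Longrightarrow> length ys \<ge> 2 \<Longrightarrow> hd ys \<noteq> last ys"
  by (cases ys) auto

lemma cycle_nbrs:
  assumes "distinct p" "length p \<ge> 3" "set (walk_edges p) \<subseteq> F" "{last p, hd p} \<in> F" "x \<in> set p"
  shows "\<exists>a b. a \<in> set p \<and> b \<in> set p \<and> a \<noteq> b \<and> a \<noteq> x \<and> b \<noteq> x \<and> {x,a} \<in> F \<and> {x,b} \<in> F"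
proof -
  obtain xs ys where p: "p = xs @ x # ys" using assms(5) split_list by metis
  show ?thesis
  proof (cases "xs = []")
    case True
    then have ys: "ys \<noteq> []" "length ys \<ge> 2" "distinct ys" "x \<notin> set ys" using assms p by auto
    have f1: "{x, hd ys} \<in> F" using assms(3) p True ys by (auto simp: we1)
    have "{last ys, x} \<in> F" using assms(4) p True ys by simp
    then have f2: "{x, last ys} \<in> F" by (simp add: insert_commute)
    have f3: "hd ys \<noteq> last ys" using hd_last_distinct ys by blast
    have f4: "hd ys \<in> set p" "last ys \<in> set p" "hd ys \<noteq> x" "last ys \<noteq> x"
      using p ys True by auto
    note f1 f2 f3 f4
    then show ?thesis by (intro exI[where x="hd ys"] exI[where x="last ys"]) simp
  next
    case False
    note xs = False
    show ?thesis
    proof (cases "ys = []")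
      case True
      then have xs2: "length xs \<ge> 2" "distinct xs" "x \<notin> set xs" using assms p by auto
      have "{last xs, x} \<in> set (walk_edges p)" using p True xs by (simp add: we2)
      then have "{last xs, x} \<in> F" using assms(3) by blast
      then have f1: "{x, last xs} \<in> F" by (simp add: insert_commute)
      have f2: "{x, hd xs} \<in> F" using assms(4) p True xs by simp
      have f3: "hd xs \<noteq> last xs" using hd_last_distinct xs2 by blast
      have f4: "hd xs \<in> set p" "last xs \<in> set p" "hd xs \<noteq> x" "last xs \<noteq> x"
        using p xs2 xs True by auto
      note f1 f2 f3 f4
      then show ?thesis by (intro exI[where x="last xs"] exI[where x="hd xs"]) simp
    next
      case False
      have d: "x \<notin> set xs" "x \<notin> set ys" "set xs \<inter> set ys = {}"
        using assms(1) unfolding p by auto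
      have l1: "last xs \<in> set xs" "hd ys \<in> set ys" using xs False by auto
      have e: "walk_edges p = walk_edges xs @ {last xs, x} # {x, hd ys} # walk_edges ys"
        unfolding p using xs False by (simp add: we_app we1)
      have "{last xs, x} \<in> set (walk_edges p)" unfolding e by simp
      then have "{last xs, x} \<in> F" using assms(3) by blast
      then have f1: "{x, last xs} \<in> F" by (simp add: insert_commute)
      have "{x, hd ys} \<in> set (walk_edges p)" unfolding e by simp
      then have f2: "{x, hd ys} \<in> F" using assms(3) by blast
      have f3: "last xs \<noteq> hd ys" using d(3) l1 disjoint_iff_not_equal by metis
      have f4: "last xs \<noteq> x" "hd ys \<noteq> x" using d(1,2) l1 by auto
      have f5: "hd ys \<in> set p" "last xs \<in> set p" using l1 unfolding p by auto
      note f1 f2 f3 f4 f5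
      then show ?thesis by (intro exI[where x="last xs"] exI[where x="hd ys"]) simp
    qed
  qed
qed

lemma forest_insert:
  assumes "forest S (induced_edges E S)" "v \<notin> S"
    "\<forall>a\<in>S. \<forall>b\<in>S. {v,a}\<in>E \<longrightarrow> {v,b}\<in>E \<longrightarrow> a = b"
  shows "forest (insert v S) (induced_edges E (insert v S))"
  unfolding forest_def has_cycle_def
proof
  assume "\<exists>p. 3 \<le> length p \<and> distinct p \<and> set p \<subseteq> insert v S \<and>
      set (walk_edges p) \<subseteq> induced_edges E (insert v S) \<and> {last p, hd p} \<in> induced_edges E (insert v S)"
  then obtain p where p: "3 \<le> length p" "distinct p" "set p \<subseteq> insert v S"
      "set (walk_edges p) \<subseteq> induced_edges E (insert v S)" "{last p, hd p} \<in> induced_edges E (insert v S)"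
    by blast
  show False
  proof (cases "v \<in> set p")
    case True
    from cycle_nbrs[OF p(2) p(1) p(4) p(5) True] obtain a b where
      ab: "a \<in> set p" "b \<in> set p" "a \<noteq> b" "a \<noteq> v" "b \<noteq> v"
        "{v,a} \<in> induced_edges E (insert v S)" "{v,b} \<in> induced_edges E (insert v S)" by blast
    then have "a \<in> S" "b \<in> S" "{v,a} \<in> E" "{v,b} \<in> E" using p(3) by (auto simp: induced_edges_def)
    then show False using assms(3) ab(3) by blast
  next
    case False
    then have sp: "set p \<subseteq> S" using p(3) by auto
    have "set (walk_edges p) \<subseteq> induced_edges E S"
      using p(4) sp we_sub unfolding induced_edges_def by blast
    moreover have "{last p, hd p} \<in> induced_edges E S"
    proof -
      have "p \<noteq> []" using p(1) by auto
      then have "hd p \<in> S" "last p \<in> S" using sp by auto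
      then show ?thesis using p(5) unfolding induced_edges_def by auto
    qed
    ultimately have "has_cycle S (induced_edges E S)" unfolding has_cycle_def using p sp by blast
    then show False using assms(1) unfolding forest_def by blast
  qed
qed


definition goodH :: "'a set \<Rightarrow> 'a set set \<Rightarrow> 'a set \<Rightarrow> ('a set \<Rightarrow> nat) \<Rightarrow> bool" where
  "goodH V E H c \<longleftrightarrow> finite H \<and> H \<subseteq> V \<and>
     (\<forall>x\<in>H. \<forall>y\<in>H. \<exists>p. is_path V E p x y \<and> set p \<subseteq> H \<and> rainbow c p \<and>
        (\<forall>e\<in>set (walk_edges p). c e < card H))"

lemma is_path_Cons:
  assumes "is_path V E p w y" "v \<in> V" "v \<notin> set p" "{v,w} \<in> E"
  shows "is_path V E (v # p) v y"
  using assms unfolding is_path_def by (auto simp: we1)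

lemma is_path_snoc:
  assumes "is_path V E p x w" "v \<in> V" "v \<notin> set p" "{v,w} \<in> E"
  shows "is_path V E (p @ [v]) x v"
proof -
  have "p \<noteq> []" "last p = w" using assms(1) unfolding is_path_def by auto
  moreover have "{w, v} = {v, w}" by auto
  ultimately show ?thesis using assms unfolding is_path_def by (auto simp: we2)
qed

lemma is_path_single: "v \<in> V \<Longrightarrow> is_path V E [v] v v"
  unfolding is_path_def by auto

lemma path_ne: "is_path V E p x y \<Longrightarrow> p \<noteq> [] \<and> hd p = x \<and> last p = y"
  unfolding is_path_def by auto

lemma goodH_ext:
  assumes g: "goodH V E H c" and v: "v \<in> V" "v \<notin> H" and w: "w \<in> H" and vw: "{v,w} \<in> E"
  shows "goodH V E (insert v H) (c({v,w} := card H))"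
proof -
  define c' where "c' = c({v,w} := card H)"
  have fin: "finite H" and HV: "H \<subseteq> V" using g unfolding goodH_def by auto
  have cardH: "card (insert v H) = Suc (card H)" using fin v by simp
  have same: "c' e = c e" if "e \<subseteq> H" for e
  proof -
    have "e \<noteq> {v,w}" using that v by auto
    then show ?thesis unfolding c'_def by simp
  qed
  have samep: "map c' (walk_edges p) = map c (walk_edges p)" if "set p \<subseteq> H" for p
    using same we_sub that by (metis (no_types, lifting) map_eq_conv subset_trans)
  have newc: "c' {v,w} = card H" unfolding c'_def by simp
  have P: "\<exists>p. is_path V E p x y \<and> set p \<subseteq> insert v H \<and> rainbow c' p \<and>
        (\<forall>e\<in>set (walk_edges p). c' e < card (insert v H))" if xy: "x \<in> insert v H" "y \<in> insert v H" for x y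
  proof (cases "x = v")
    case True
    show ?thesis
    proof (cases "y = v")
      case True
      show ?thesis using \<open>x = v\<close> True is_path_single[OF v(1), of E]
        by (intro exI[of _ "[v]"]) (simp add: rainbow_def)
    next
      case False
      then have yH: "y \<in> H" using xy by auto
      obtain p where p: "is_path V E p w y" "set p \<subseteq> H" "rainbow c p"
        "\<forall>e\<in>set (walk_edges p). c e < card H"
        using g w yH unfolding goodH_def by blast
      have pne: "p \<noteq> []" "hd p = w" using path_ne[OF p(1)] by auto
      have vp: "v \<notin> set p" using p(2) v by auto
      have ip: "is_path V E (v # p) v y" using is_path_Cons[OF p(1) v(1) vp vw] .
      have we: "walk_edges (v # p) = {v,w} # walk_edges p" using pne by (simp add: we1)
      have m: "map c' (walk_edges (v # p)) = card H # map c (walk_edges p)"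
        using we samep[OF p(2)] newc by simp
      have "card H \<notin> set (map c (walk_edges p))" using p(4) by auto
      then have "rainbow c' (v # p)" using p(3) m unfolding rainbow_def by simp
      moreover have "\<forall>e\<in>set (walk_edges (v # p)). c' e < card (insert v H)"
      proof
        fix e assume "e \<in> set (walk_edges (v # p))"
        then have "c' e \<in> set (map c' (walk_edges (v # p)))" by simp
        then have "c' e = card H \<or> c' e \<in> c ` set (walk_edges p)" unfolding m by simp
        then show "c' e < card (insert v H)" using p(4) cardH by auto
      qed
      ultimately show ?thesis using ip p(2) True by (intro exI[of _ "v # p"]) auto
    qed
  next
    case False
    then have xH: "x \<in> H" using xy by auto
    show ?thesis
    proof (cases "y = v")
      case True
      obtain p where p: "is_path V E p x w" "set p \<subseteq> H" "rainbow c p"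
        "\<forall>e\<in>set (walk_edges p). c e < card H"
        using g w xH unfolding goodH_def by blast
      have pne: "p \<noteq> []" "last p = w" using path_ne[OF p(1)] by auto
      have vp: "v \<notin> set p" using p(2) v by auto
      have ip: "is_path V E (p @ [v]) x v" using is_path_snoc[OF p(1) v(1) vp vw] .
      have we: "walk_edges (p @ [v]) = walk_edges p @ [{v,w}]" using pne
        by (simp add: we2 insert_commute)
      have m: "map c' (walk_edges (p @ [v])) = map c (walk_edges p) @ [card H]"
        using we samep[OF p(2)] newc by simp
      have "card H \<notin> set (map c (walk_edges p))" using p(4) by auto
      then have "rainbow c' (p @ [v])" using p(3) m unfolding rainbow_def by simp
      moreover have "\<forall>e\<in>set (walk_edges (p @ [v])). c' e < card (insert v H)"
      proof
        fix e assume "e \<in> set (walk_edges (p @ [v]))"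
        then have "c' e \<in> set (map c' (walk_edges (p @ [v])))" by simp
        then have "c' e = card H \<or> c' e \<in> c ` set (walk_edges p)" unfolding m by auto
        then show "c' e < card (insert v H)" using p(4) cardH by auto
      qed
      ultimately show ?thesis using ip p(2) True by (intro exI[of _ "p @ [v]"]) auto
    next
      case False
      then have yH: "y \<in> H" using xy by auto
      obtain p where p: "is_path V E p x y" "set p \<subseteq> H" "rainbow c p"
        "\<forall>e\<in>set (walk_edges p). c e < card H"
        using g xH yH unfolding goodH_def by blast
      have "rainbow c' p" using p(3) samep[OF p(2)] unfolding rainbow_def by metis
      moreover have "\<forall>e\<in>set (walk_edges p). c' e < card (insert v H)"
        using p(4) same we_sub p(2) cardH by (metis less_SucI subset_trans)
      ultimately show ?thesis using p by (intro exI[of _ p]) auto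
    qed
  qed
  show ?thesis unfolding goodH_def c'_def[symmetric] using fin HV v P by auto
qed


definition final :: "'a set \<Rightarrow> 'a set set \<Rightarrow> 'a set \<Rightarrow> bool" where
  "final V E H \<longleftrightarrow> (\<forall>v\<in>V-H. \<exists>a b. a\<in>H \<and> b\<in>H \<and> a\<noteq>b \<and> {v,a}\<in>E \<and> {v,b}\<in>E)"

lemma crossing: "p \<noteq> [] \<Longrightarrow> P (hd p) \<Longrightarrow> \<not> P (last p) \<Longrightarrow>
  \<exists>y x. {y,x} \<in> set (walk_edges p) \<and> P y \<and> \<not> P x"
proof (induction p rule: walk_edges.induct)
  case (1 x y xs)
  show ?case
  proof (cases "P y")
    case True
    then obtain a b where "{a,b} \<in> set (walk_edges (y # xs))" "P a" "\<not> P b"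
      using 1 by auto
    then show ?thesis by auto
  next
    case False
    then show ?thesis using 1 by auto
  qed
qed auto

lemma iterate:
  assumes conn: "connected_graph V E" and fV: "finite V"
  shows "goodH V E H c \<Longrightarrow> S \<subseteq> H \<Longrightarrow> forest S (induced_edges E S) \<Longrightarrow> card H + 1 \<le> 2 * card S \<Longrightarrow>
    \<exists>H' S' c'. goodH V E H' c' \<and> S' \<subseteq> H' \<and> forest S' (induced_edges E S') \<and>
      card H' + 1 \<le> 2 * card S' \<and> final V E H'"
proof (induction "card (V - H)" arbitrary: H S c rule: less_induct)
  case less
  have fin: "finite H" and HV: "H \<subseteq> V" using less.prems(1) unfolding goodH_def by auto
  have finS: "finite S" using fin less.prems(2) finite_subset by blast
  have finVH: "finite (V - H)" using fV by simp
  show ?case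
  proof (cases "final V E H")
    case True then show ?thesis using less.prems by blast
  next
    case False
    then obtain v where v: "v \<in> V" "v \<notin> H"
      and nt: "\<not>(\<exists>a b. a\<in>H \<and> b\<in>H \<and> a\<noteq>b \<and> {v,a}\<in>E \<and> {v,b}\<in>E)"
      unfolding final_def by blast
    show ?thesis
    proof (cases "\<exists>w\<in>H. {v,w}\<in>E")
      case True
      then obtain w where w: "w\<in>H" "{v,w}\<in>E" by blast
      have uniq: "\<forall>a\<in>H. {v,a}\<in>E \<longrightarrow> a = w" using nt w by blast
      have g': "goodH V E (insert v H) (c({v,w} := card H))"
        by (rule goodH_ext[OF less.prems(1) v w])
      have vS: "v \<notin> S" using less.prems(2) v by auto
      have f': "forest (insert v S) (induced_edges E (insert v S))"
        by (rule forest_insert[OF less.prems(3) vS]) (use uniq less.prems(2) in blast)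
      have card: "card (insert v H) + 1 \<le> 2 * card (insert v S)"
        using less.prems(4) fin finS v vS by simp
      have "V - insert v H = (V - H) - {v}" by auto
      then have lt: "card (V - insert v H) < card (V - H)"
        using finVH v card_Diff1_less by fastforce
      have sub: "insert v S \<subseteq> insert v H" using less.prems(2) by auto
      show ?thesis using less.hyps[OF lt g' sub f' card] by blast
    next
      case False
      have "S \<noteq> {}" using less.prems(4) by auto
      then obtain h where h: "h \<in> H" using less.prems(2) by auto
      obtain p where p: "is_path V E p h v" using conn h HV v unfolding connected_graph_def by blast
      define P where "P z = (z \<in> H \<or> (\<exists>w\<in>H. {z,w}\<in>E))" for z
      have "p \<noteq> []" "P (hd p)" "\<not> P (last p)"
        using p h v False unfolding is_path_def P_def by (auto simp: insert_commute)
      then obtain y x where yx: "{y,x} \<in> set (walk_edges p)" "P y" "\<not> P x"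
        using crossing[of p P] by blast
      have yxE: "{y,x} \<in> E" using yx(1) p unfolding is_path_def by auto
      have yxV: "y \<in> V" "x \<in> V" using we_sub[OF yx(1)] p unfolding is_path_def by auto
      have x: "x \<notin> H" "\<forall>w\<in>H. {x,w} \<notin> E" using yx(3) unfolding P_def by auto
      have xyE: "{x,y} \<in> E" using yxE by (simp add: insert_commute)
      have yH: "y \<notin> H" using x xyE by blast
      then obtain w where w: "w \<in> H" "{y,w} \<in> E" using yx(2) unfolding P_def by auto
      have xy: "x \<noteq> y" using yx(2,3) by auto
      have g1: "goodH V E (insert y H) (c({y,w} := card H))"
        by (rule goodH_ext[OF less.prems(1) yxV(1) yH w])
      have x1: "x \<notin> insert y H" using x xy by auto
      have g2: "goodH V E (insert x (insert y H)) ((c({y,w} := card H))({x,y} := card (insert y H)))"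
        by (rule goodH_ext[OF g1 yxV(2) x1 _ xyE]) simp
      have xS: "x \<notin> S" using less.prems(2) x by auto
      have f': "forest (insert x S) (induced_edges E (insert x S))"
        by (rule forest_insert[OF less.prems(3) xS]) (use x less.prems(2) in blast)
      have card: "card (insert x (insert y H)) + 1 \<le> 2 * card (insert x S)"
        using less.prems(4) fin finS x1 yH xS by simp
      have "V - insert x (insert y H) \<subset> V - H" using yxV x by auto
      then have lt: "card (V - insert x (insert y H)) < card (V - H)"
        using finVH psubset_card_mono by blast
      have sub: "insert x S \<subseteq> insert x (insert y H)" using less.prems(2) by auto
      show ?thesis using less.hyps[OF lt g2 sub f' card] by blast
    qed
  qed
qed


lemma assemble:
  assumes g: "goodH V E H c" and fl: "final V E H"
  shows "\<exists>c'. c' ` E \<subseteq> {..<card H + 2} \<and> rainbow_connected V E c'"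
proof -
  have HV: "H \<subseteq> V" using g unfolding goodH_def by auto
  obtain a b where ab: "\<forall>v\<in>V-H. a v \<in> H \<and> b v \<in> H \<and> a v \<noteq> b v \<and> {v, a v} \<in> E \<and> {v, b v} \<in> E"
    using fl unfolding final_def by metis
  define c' where "c' e = (if \<exists>u\<in>V-H. e = {u, a u} then card H
      else if \<exists>u\<in>V-H. e = {u, b u} then Suc (card H)
      else if c e < card H then c e else 0)" for e
  have range: "c' ` E \<subseteq> {..<card H + 2}" unfolding c'_def by auto
  have cA: "c' {u, a u} = card H" if "u \<in> V - H" for u
    using that unfolding c'_def by auto
  have cB: "c' {u, b u} = Suc (card H)" if u: "u \<in> V - H" for u
  proof -
    have "\<not> (\<exists>u'\<in>V-H. {u, b u} = {u', a u'})"
    proof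
      assume "\<exists>u'\<in>V-H. {u, b u} = {u', a u'}"
      then obtain u' where u': "u' \<in> V - H" "{u, b u} = {u', a u'}" by blast
      have "a u' \<in> H" "b u \<in> H" "a u \<noteq> b u" using ab u u' by auto
      then show False using u u' by (auto simp: doubleton_eq_iff)
    qed
    moreover have "\<exists>ua\<in>V - H. {u, b u} = {ua, b ua}" using u by blast
    ultimately show ?thesis unfolding c'_def by simp
  qed
  have cH: "c' e = c e" if "e \<subseteq> H" "c e < card H" for e
  proof -
    have "\<not> (\<exists>u\<in>V-H. e = {u, a u})" "\<not> (\<exists>u\<in>V-H. e = {u, b u})" using that by auto
    then show ?thesis unfolding c'_def using that by auto
  qed
  have inH: "\<exists>p. is_path V E p x y \<and> set p \<subseteq> H \<and> map c' (walk_edges p) = map c (walk_edges p)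
      \<and> distinct (map c (walk_edges p)) \<and> (\<forall>e\<in>set (walk_edges p). c e < card H)"
    if xyH: "x \<in> H" "y \<in> H" for x y
  proof -
    obtain p where p: "is_path V E p x y" "set p \<subseteq> H" "rainbow c p"
        "\<forall>e\<in>set (walk_edges p). c e < card H"
      using g xyH unfolding goodH_def by blast
    have "\<forall>e\<in>set (walk_edges p). c' e = c e"
    proof
      fix e assume e: "e \<in> set (walk_edges p)"
      then have "e \<subseteq> H" using we_sub p(2) by blast
      then show "c' e = c e" using cH p(4) e by blast
    qed
    then have "map c' (walk_edges p) = map c (walk_edges p)" by simp
    then show ?thesis using p unfolding rainbow_def by blast
  qed
  have "rainbow_connected V E c'"
    unfolding rainbow_connected_def
  proof (intro ballI)
    fix u v assume u: "u \<in> V" and v: "v \<in> V"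
    show "\<exists>p. is_path V E p u v \<and> rainbow c' p"
    proof (cases "u \<in> H")
      case uH: True
      show ?thesis
      proof (cases "v \<in> H")
        case True
        then show ?thesis using inH[OF uH True] unfolding rainbow_def by metis
      next
        case False
        then have vv: "v \<in> V - H" using v by auto
        obtain p where p: "is_path V E p u (b v)" "set p \<subseteq> H" "map c' (walk_edges p) = map c (walk_edges p)"
          "distinct (map c (walk_edges p))" "\<forall>e\<in>set (walk_edges p). c e < card H"
          using inH[OF uH] ab vv by blast
        have vp: "v \<notin> set p" using p(2) vv by auto
        have ip: "is_path V E (p @ [v]) u v" using is_path_snoc[OF p(1) v vp] ab vv by blast
        have pne: "p \<noteq> []" "last p = b v" using path_ne[OF p(1)] by auto
        have "walk_edges (p @ [v]) = walk_edges p @ [{v, b v}]" using pne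
          by (simp add: we2 insert_commute)
        then have m: "map c' (walk_edges (p @ [v])) = map c (walk_edges p) @ [Suc (card H)]"
          using p(3) cB[OF vv] by simp
        have "Suc (card H) \<notin> set (map c (walk_edges p))" using p(5) by auto
        then have "rainbow c' (p @ [v])" unfolding rainbow_def m using p(4) by simp
        then show ?thesis using ip by blast
      qed
    next
      case uH: False
      then have uu: "u \<in> V - H" using u by auto
      show ?thesis
      proof (cases "v \<in> H")
        case True
        obtain p where p: "is_path V E p (a u) v" "set p \<subseteq> H" "map c' (walk_edges p) = map c (walk_edges p)"
          "distinct (map c (walk_edges p))" "\<forall>e\<in>set (walk_edges p). c e < card H"
          using inH[OF _ True] ab uu by blast
        have up: "u \<notin> set p" using p(2) uu by auto
        have ip: "is_path V E (u # p) u v" using is_path_Cons[OF p(1) u up] ab uu by blast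
        have pne: "p \<noteq> []" "hd p = a u" using path_ne[OF p(1)] by auto
        have "walk_edges (u # p) = {u, a u} # walk_edges p" using pne by (simp add: we1)
        then have m: "map c' (walk_edges (u # p)) = card H # map c (walk_edges p)"
          using p(3) cA[OF uu] by simp
        have "card H \<notin> set (map c (walk_edges p))" using p(5) by auto
        then have "rainbow c' (u # p)" unfolding rainbow_def m using p(4) by simp
        then show ?thesis using ip by blast
      next
        case False
        then have vv: "v \<in> V - H" using v by auto
        show ?thesis
        proof (cases "u = v")
          case True
          then show ?thesis using is_path_single[OF u, of E]
            by (intro exI[of _ "[u]"]) (simp add: rainbow_def)
        next
          case False
          obtain p where p: "is_path V E p (a u) (b v)" "set p \<subseteq> H" "map c' (walk_edges p) = map c (walk_edges p)"
            "distinct (map c (walk_edges p))" "\<forall>e\<in>set (walk_edges p). c e < card H"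
            using inH ab uu vv by blast
          have vp: "v \<notin> set p" using p(2) vv by auto
          have ip1: "is_path V E (p @ [v]) (a u) v" using is_path_snoc[OF p(1) v vp] ab vv by blast
          have up: "u \<notin> set (p @ [v])" using p(2) uu False by auto
          have ip: "is_path V E (u # p @ [v]) u v" using is_path_Cons[OF ip1 u up] ab uu by blast
          have pne: "p \<noteq> []" "hd p = a u" "last p = b v" using path_ne[OF p(1)] by auto
          have "walk_edges (p @ [v]) = walk_edges p @ [{v, b v}]" using pne
            by (simp add: we2 insert_commute)
          moreover have "walk_edges (u # p @ [v]) = {u, a u} # walk_edges (p @ [v])" using pne
            by (simp add: we1)
          ultimately have m: "map c' (walk_edges (u # p @ [v])) = card H # map c (walk_edges p) @ [Suc (card H)]"
            using p(3) cA[OF uu] cB[OF vv] by simp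
          have "card H \<notin> set (map c (walk_edges p))" "Suc (card H) \<notin> set (map c (walk_edges p))"
            using p(5) by auto
          then have "rainbow c' (u # p @ [v])" unfolding rainbow_def m using p(4) by simp
          then show ?thesis using ip by blast
        qed
      qed
    qed
  qed
  then show ?thesis using range by blast
qed

theorem theorem3:
  fixes V :: "'a set" and E :: "'a set set"
  assumes "simple_graph V E" and "connected_graph V E"
  shows "rc V E \<le> 2 * forest_number V E + 2"
proof -
  have fV: "finite V" using assms(1) unfolding simple_graph_def by auto
  obtain r where r: "r \<in> V" using assms(2) unfolding connected_graph_def by auto
  have g0: "goodH V E {r} (\<lambda>_. 0)"
    unfolding goodH_def using r is_path_single[OF r, of E]
    by (auto intro!: exI[of _ "[r]"] simp: rainbow_def)
  have f0: "forest {} (induced_edges E {})" unfolding forest_def has_cycle_def by auto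
  have f1: "forest {r} (induced_edges E {r})" using forest_insert[OF f0, of r] by simp
  obtain H S c where HSc: "goodH V E H c" "S \<subseteq> H" "forest S (induced_edges E S)"
      "card H + 1 \<le> 2 * card S" "final V E H"
    using iterate[OF assms(2) fV g0 _ f1] by auto
  have SV: "S \<subseteq> V" using HSc(1,2) unfolding goodH_def by auto
  obtain c' where c': "c' ` E \<subseteq> {..<card H + 2}" "rainbow_connected V E c'"
    using assemble[OF HSc(1) HSc(5)] by blast
  have "rc V E \<le> card H + 2" unfolding rc_def by (rule Least_le) (use c' in blast)
  moreover have "card S \<le> forest_number V E"
  proof -
    have "{card S | S. S \<subseteq> V \<and> forest S (induced_edges E S)} \<subseteq> card ` Pow V" by auto
    then have "finite {card S | S. S \<subseteq> V \<and> forest S (induced_edges E S)}"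
      using fV finite_subset by blast
    then show ?thesis unfolding forest_number_def using SV HSc(3) by (intro Max_ge) auto
  qed
  ultimately show ?thesis using HSc(4) by linarith
qed

end
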